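(* The complete tripartite graphs $K_{1,1,1}$, $K_{1,1,2}$, $K_{1,2,2}$, $K_{2,2,2}$ and $K_{2,2,3}$ are $e$-positive, and every other complete tripartite graph $K_{r,s,t}$ (with $r,s,t\ge1$) is not Schur positive.
   Context: $K_{r,s,t}$ denotes the complete tripartite graph with parts of sizes $r,s,t$. For a finite simple graph $G$, the chromatic symmetric function is $X_G=\sum_{\kappa}\prod_{v\in V(G)}x_{\kappa(v)}$ over proper colorings $\kappa:V(G)\to\{1,2,\dots\}$. $G$ is $e$-positive (resp. Schur positive) if all coefficients of $X_G$ in the basis of elementary symmetric functions $e_\lambda$ (resp. Schur functions $s_\lambda$) are nonnegative. *)

theory Defs
  imports "HOL-Library.FuncSet"
begin

text \<open>Homogeneous symmetric functions of degree n are represented by their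
coefficient functions on monomials x^alpha, where alpha :: nat => nat is an
exponent vector (variables x_0, x_1, ... indexed by nat).\<close>

definition partitions :: "nat \<Rightarrow> nat list set" where
  "partitions n = {lam. sorted_wrt (\<ge>) lam \<and> (\<forall>x\<in>set lam. 0 < x) \<and> sum_list lam = n}"

text \<open>Graph: finite vertex set V with symmetric irreflexive adjacency E.
Coefficient of x^alpha in the chromatic symmetric function X_G:
the number of proper colourings with exactly alpha i vertices of colour i.\<close>
definition chrom_coeff :: "'a set \<Rightarrow> ('a \<Rightarrow> 'a \<Rightarrow> bool) \<Rightarrow> (nat \<Rightarrow> nat) \<Rightarrow> nat" where
  "chrom_coeff V E alpha = card {kappa \<in> V \<rightarrow>\<^sub>E (UNIV :: nat set).
      (\<forall>u\<in>V. \<forall>v\<in>V. E u v \<longrightarrow> kappa u \<noteq> kappa v) \<and>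
      (\<forall>i. card {v\<in>V. kappa v = i} = alpha i)}"

text \<open>Coefficient of x^alpha in e_lam = e_{lam_1} e_{lam_2} ...: choices of sets
S_j of lam_j distinct variables, one per factor, whose product is x^alpha.\<close>
definition e_coeff :: "nat list \<Rightarrow> (nat \<Rightarrow> nat) \<Rightarrow> nat" where
  "e_coeff lam alpha = card {Ss :: nat set list. length Ss = length lam \<and>
      (\<forall>j<length lam. finite (Ss ! j) \<and> card (Ss ! j) = lam ! j) \<and>
      (\<forall>i. card {j. j < length lam \<and> i \<in> Ss ! j} = alpha i)}"

definition cells :: "nat list \<Rightarrow> (nat \<times> nat) set" where
  "cells lam = {(i, j). i < length lam \<and> j < lam ! i}"

definition ssyt :: "nat list \<Rightarrow> (nat \<Rightarrow> nat) \<Rightarrow> ((nat \<times> nat) \<Rightarrow> nat) set" where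
  "ssyt lam alpha = {T \<in> cells lam \<rightarrow>\<^sub>E (UNIV :: nat set).
      (\<forall>i j. (i, Suc j) \<in> cells lam \<longrightarrow> T (i, j) \<le> T (i, Suc j)) \<and>
      (\<forall>i j. (Suc i, j) \<in> cells lam \<longrightarrow> T (i, j) < T (Suc i, j)) \<and>
      (\<forall>k. card {c \<in> cells lam. T c = k} = alpha k)}"

definition s_coeff :: "nat list \<Rightarrow> (nat \<Rightarrow> nat) \<Rightarrow> nat" where
  "s_coeff lam alpha = card (ssyt lam alpha)"

definition e_positive :: "'a set \<Rightarrow> ('a \<Rightarrow> 'a \<Rightarrow> bool) \<Rightarrow> bool" where
  "e_positive V E = (\<exists>c :: nat list \<Rightarrow> int.
      (\<forall>mu\<in>partitions (card V). 0 \<le> c mu) \<and>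
      (\<forall>alpha. int (chrom_coeff V E alpha) =
          (\<Sum>mu\<in>partitions (card V). c mu * int (e_coeff mu alpha))))"

definition schur_positive :: "'a set \<Rightarrow> ('a \<Rightarrow> 'a \<Rightarrow> bool) \<Rightarrow> bool" where
  "schur_positive V E = (\<exists>c :: nat list \<Rightarrow> int.
      (\<forall>mu\<in>partitions (card V). 0 \<le> c mu) \<and>
      (\<forall>alpha. int (chrom_coeff V E alpha) =
          (\<Sum>mu\<in>partitions (card V). c mu * int (s_coeff mu alpha))))"

definition tri_V :: "nat \<Rightarrow> nat \<Rightarrow> nat \<Rightarrow> (nat \<times> nat) set" where
  "tri_V r s t = {(i, j). (i = 0 \<and> j < r) \<or> (i = 1 \<and> j < s) \<or> (i = 2 \<and> j < t)}"

definition tri_E :: "(nat \<times> nat) \<Rightarrow> (nat \<times> nat) \<Rightarrow> bool" where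
  "tri_E u v = (fst u \<noteq> fst v)"

end

theory Submission
  imports Defs
begin

fun cf :: "nat list \<Rightarrow> nat list \<Rightarrow> nat" where
  "cf ns [] = (if (\<forall>n\<in>set ns. n = 0) then 1 else 0)"
| "cf ns (a#as) = sum_list (map (\<lambda>p. if a \<le> ns!p then (ns!p choose a) * cf (ns[p := ns!p - a]) as else 0) [0..<length ns])"

fun blists :: "nat list \<Rightarrow> nat \<Rightarrow> bool list list" where
  "blists [] a = (if a = 0 then [[]] else [])"
| "blists (x#xs) a = map (Cons False) (blists xs a) @
     (if 0 < x \<and> 0 < a then map (Cons True) (blists xs (a - 1)) else [])"

definition dec :: "nat list \<Rightarrow> bool list \<Rightarrow> nat list" where
  "dec lam bs = map (\<lambda>(x,b). if b then x - 1 else x) (zip lam bs)"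

fun ef :: "nat list \<Rightarrow> nat list \<Rightarrow> nat" where
  "ef lam [] = (if (\<forall>n\<in>set lam. n = 0) then 1 else 0)"
| "ef lam (a#as) = sum_list (map (\<lambda>bs. ef (dec lam bs) as) (blists lam a))"

fun compsf :: "nat \<Rightarrow> nat \<Rightarrow> nat list list" where
  "compsf 0 n = (if n = 0 then [[]] else [])"
| "compsf (Suc f) n = (if n = 0 then [[]] else concat (map (\<lambda>k. map (Cons k) (compsf f (n - k))) [1..<Suc n]))"


definition Kset :: "'a set \<Rightarrow> ('a \<Rightarrow> 'a \<Rightarrow> bool) \<Rightarrow> (nat \<Rightarrow> nat) \<Rightarrow> ('a \<Rightarrow> nat) set" where
  "Kset V E alpha = {kappa \<in> V \<rightarrow>\<^sub>E (UNIV :: nat set).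
      (\<forall>u\<in>V. \<forall>v\<in>V. E u v \<longrightarrow> kappa u \<noteq> kappa v) \<and>
      (\<forall>i. card {v\<in>V. kappa v = i} = alpha i)}"

lemma chrom_Kset: "chrom_coeff V E alpha = card (Kset V E alpha)"
  by (simp add: chrom_coeff_def Kset_def)

lemma Kset_sub: assumes "finite V" shows "Kset V E alpha \<subseteq> V \<rightarrow>\<^sub>E {i. alpha i \<noteq> 0}"
proof
  fix k assume k: "k \<in> Kset V E alpha"
  have "k v \<in> {i. alpha i \<noteq> 0}" if "v \<in> V" for v
  proof -
    have "card {w\<in>V. k w = k v} = alpha (k v)" using k by (simp add: Kset_def)
    moreover have "card {w\<in>V. k w = k v} \<noteq> 0" using assms that by (subst card_0_eq) auto
    ultimately show ?thesis by simp
  qed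
  then show "k \<in> V \<rightarrow>\<^sub>E {i. alpha i \<noteq> 0}" using k by (auto simp: Kset_def PiE_iff)
qed

lemma Kset_finite: "finite V \<Longrightarrow> finite {i. alpha i \<noteq> 0} \<Longrightarrow> finite (Kset V E alpha)"
  by (rule finite_subset[OF Kset_sub]) (auto intro: finite_PiE)

lemma Kset_inf: assumes "finite V" "infinite {i. alpha i \<noteq> 0}" shows "Kset V E alpha = {}"
proof (rule ccontr)
  assume "Kset V E alpha \<noteq> {}"
  then obtain k where k: "k \<in> Kset V E alpha" by blast
  have "{i. alpha i \<noteq> 0} \<subseteq> k ` V"
  proof
    fix i assume "i \<in> {i. alpha i \<noteq> 0}"
    then have "card {v\<in>V. k v = i} \<noteq> 0" using k by (simp add: Kset_def)
    then obtain v where "v \<in> V" "k v = i" by (metis (mono_tags, lifting) card.empty empty_Collect_eq)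
    then show "i \<in> k ` V" by blast
  qed
  then show False using assms finite_subset by blast
qed

lemma chrom_step:
  fixes P :: "'a \<Rightarrow> nat"
  assumes V: "finite V" and fin: "finite {i. alpha i \<noteq> 0}" and ai: "alpha i \<noteq> 0"
  shows "card (Kset V (\<lambda>u v. P u \<noteq> P v) alpha) =
    (\<Sum>C\<in>{C. C \<subseteq> V \<and> card C = alpha i \<and> (\<forall>u\<in>C. \<forall>v\<in>C. P u = P v)}.
        card (Kset (V - C) (\<lambda>u v. P u \<noteq> P v) (alpha(i := 0))))"
proof -
  define E where "E = (\<lambda>u v. P u \<noteq> P v)"
  define A where "A = Kset V E alpha"
  define CC where "CC = {C. C \<subseteq> V \<and> card C = alpha i \<and> (\<forall>u\<in>C. \<forall>v\<in>C. P u = P v)}"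
  define fib where "fib C = {k\<in>A. {v\<in>V. k v = i} = C}" for C
  have finA: "finite A" unfolding A_def using Kset_finite[OF V fin] .
  have finCC: "finite CC" unfolding CC_def using V by (auto intro: finite_subset[of _ "Pow V"])
  have Aeq: "A = (\<Union>C\<in>CC. fib C)"
  proof
    show "A \<subseteq> (\<Union>C\<in>CC. fib C)"
    proof
      fix k assume k: "k \<in> A"
      let ?C = "{v\<in>V. k v = i}"
      have kk: "\<forall>u\<in>V. \<forall>v\<in>V. P u \<noteq> P v \<longrightarrow> k u \<noteq> k v" "\<forall>j. card {v\<in>V. k v = j} = alpha j"
        using k unfolding A_def Kset_def E_def by auto
      have "\<forall>u\<in>?C. \<forall>v\<in>?C. P u = P v"
      proof (intro ballI)
        fix u v assume "u \<in> ?C" "v \<in> ?C"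
        then have "u \<in> V" "v \<in> V" "k u = k v" by auto
        then show "P u = P v" using kk(1) by metis
      qed
      moreover have "?C \<subseteq> V" by blast
      moreover have "card ?C = alpha i" using kk(2) by blast
      ultimately have "?C \<in> CC" unfolding CC_def by blast
      then show "k \<in> (\<Union>C\<in>CC. fib C)" using k unfolding fib_def by blast
    qed
  qed (unfold fib_def, blast)
  have "card A = (\<Sum>C\<in>CC. card (fib C))"
    unfolding Aeq by (rule card_UN_disjoint[OF finCC]) (auto simp: fib_def intro: finite_subset[OF _ finA])
  also have "\<dots> = (\<Sum>C\<in>CC. card (Kset (V - C) E (alpha(i := 0))))"
  proof (rule sum.cong[OF refl])
    fix C assume C: "C \<in> CC"
    define f where "f k = restrict k (V - C)" for k :: "'a \<Rightarrow> nat"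
    define g where "g k' = (\<lambda>v. if v \<in> V then (if v \<in> C then i else k' v) else undefined)" for k' :: "'a \<Rightarrow> nat"
    have "bij_betw f (fib C) (Kset (V - C) E (alpha(i := 0)))"
    proof (rule bij_betwI[where g = g])
      show "f \<in> fib C \<rightarrow> Kset (V - C) E (alpha(i := 0))"
      proof
        fix k assume k: "k \<in> fib C"
        have kA: "k \<in> V \<rightarrow>\<^sub>E UNIV" "\<forall>u\<in>V. \<forall>v\<in>V. E u v \<longrightarrow> k u \<noteq> k v" "\<forall>j. card {v\<in>V. k v = j} = alpha j"
          and kC: "{v\<in>V. k v = i} = C" using k by (auto simp: fib_def A_def Kset_def)
        have "card {v\<in>V - C. f k v = j} = (alpha(i := 0)) j" for j
        proof (cases "j = i")
          case True
          then have "{v\<in>V - C. f k v = j} = {}" using kC by (auto simp: f_def)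
          then show ?thesis using True by (metis card.empty fun_upd_same)
        next
          case False
          then have "{v\<in>V - C. f k v = j} = {v\<in>V. k v = j}" using kC by (auto simp: f_def)
          then show ?thesis using False kA(3) by (metis fun_upd_other)
        qed
        then show "f k \<in> Kset (V - C) E (alpha(i := 0))"
          using kA unfolding Kset_def f_def by auto
      qed
      show "g \<in> Kset (V - C) E (alpha(i := 0)) \<rightarrow> fib C"
      proof
        fix k' assume k': "k' \<in> Kset (V - C) E (alpha(i := 0))"
        have k'A: "k' \<in> (V - C) \<rightarrow>\<^sub>E UNIV" "\<forall>u\<in>V - C. \<forall>v\<in>V - C. E u v \<longrightarrow> k' u \<noteq> k' v"
           "\<forall>j. card {v\<in>V - C. k' v = j} = (alpha(i := 0)) j" using k' by (auto simp: Kset_def)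
        have fin': "finite {v\<in>V - C. k' v = i}" using V by auto
        have "card {v\<in>V - C. k' v = i} = 0" using k'A(3)[rule_format, of i] by simp
        then have emp: "{v\<in>V - C. k' v = i} = {}" using fin' by (simp only: card_0_eq)
        have noi: "\<forall>v\<in>V - C. k' v \<noteq> i"
        proof (intro ballI notI)
          fix v assume "v \<in> V - C" "k' v = i"
          then have "v \<in> {v\<in>V - C. k' v = i}" by simp
          then show False unfolding emp by (rule emptyE)
        qed
        have CV: "C \<subseteq> V" "card C = alpha i" "\<forall>u\<in>C. \<forall>v\<in>C. P u = P v" using C unfolding CC_def by blast+
        have clsi: "{v\<in>V. g k' v = i} = C" using noi CV(1) unfolding g_def by auto
        have cls: "card {v\<in>V. g k' v = j} = alpha j" for j
        proof (cases "j = i")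
          case True then show ?thesis using clsi CV by simp
        next
          case False
          then have "{v\<in>V. g k' v = j} = {v\<in>V - C. k' v = j}" by (auto simp: g_def)
          then show ?thesis using False k'A(3)[rule_format, of j] by simp
        qed
        have prp: "\<forall>u\<in>V. \<forall>v\<in>V. E u v \<longrightarrow> g k' u \<noteq> g k' v"
        proof (intro ballI impI)
          fix u v assume uv: "u \<in> V" "v \<in> V" "E u v"
          then have "P u \<noteq> P v" by (simp add: E_def)
          then have "\<not> (u \<in> C \<and> v \<in> C)" using CV(3) by blast
          then show "g k' u \<noteq> g k' v"
            using uv k'A(2) noi by (auto simp: g_def)
        qed
        have "g k' \<in> V \<rightarrow>\<^sub>E UNIV" by (auto simp: g_def)
        then show "g k' \<in> fib C" using prp cls clsi unfolding fib_def A_def Kset_def by auto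
      qed
      show "g (f k) = k" if "k \<in> fib C" for k
      proof -
        have kA: "k \<in> V \<rightarrow>\<^sub>E UNIV" and kC: "{v\<in>V. k v = i} = C" using that by (auto simp: fib_def A_def Kset_def)
        show ?thesis
        proof
          fix v show "g (f k) v = k v"
            using kA kC by (cases "v \<in> V") (auto simp: g_def f_def PiE_iff extensional_def)
        qed
      qed
      show "f (g k') = k'" if "k' \<in> Kset (V - C) E (alpha(i := 0))" for k'
      proof -
        have "k' \<in> (V - C) \<rightarrow>\<^sub>E UNIV" using that by (auto simp: Kset_def)
        then show ?thesis by (auto simp: f_def g_def PiE_iff extensional_def fun_eq_iff)
      qed
    qed
    then show "card (fib C) = card (Kset (V - C) E (alpha(i := 0)))" by (rule bij_betw_same_card)
  qed
  finally show ?thesis unfolding A_def CC_def E_def .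
qed

lemma sum_upt_list: "sum_list (map f [0..<n]) = (\<Sum>p<n. f p)"
  by (metis atLeast0LessThan set_upt sum_set_upt_conv_sum_list_nat)

lemma cf_Cons_sum: "cf ns (a#as) = (\<Sum>p<length ns. (ns!p choose a) * cf (ns[p := ns!p - a]) as)"
  by (simp only: cf.simps sum_upt_list) (rule sum.cong, auto simp: binomial_eq_0)

lemma chrom_cf:
  fixes P :: "'a \<Rightarrow> nat"
  assumes "distinct ks" "\<forall>i. (alpha i \<noteq> 0) = (i \<in> set ks)" "finite V"
    "\<forall>v\<in>V. P v < length ns" "\<forall>p<length ns. card {v\<in>V. P v = p} = ns!p"
  shows "card (Kset V (\<lambda>u v. P u \<noteq> P v) alpha) = cf ns (map alpha ks)"
  using assms
proof (induction ks arbitrary: alpha V ns)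
  case Nil
  then have a0: "\<And>i. alpha i = 0" by simp
  show ?case
  proof (cases "V = {}")
    case True
    have "Kset V (\<lambda>u v. P u \<noteq> P v) alpha = {\<lambda>_. undefined}"
      using True a0 by (auto simp: Kset_def)
    moreover have "\<forall>n\<in>set ns. n = 0"
    proof
      fix n assume "n \<in> set ns"
      then obtain p where "p < length ns" "ns!p = n" by (auto simp: in_set_conv_nth)
      then show "n = 0" using Nil.prems(5) True by auto
    qed
    ultimately show ?thesis by simp
  next
    case False
    then obtain v where v: "v \<in> V" by blast
    have "Kset V (\<lambda>u v. P u \<noteq> P v) alpha = {}"
    proof (rule ccontr)
      assume "Kset V (\<lambda>u v. P u \<noteq> P v) alpha \<noteq> {}"
      then obtain k where k: "k \<in> Kset V (\<lambda>u v. P u \<noteq> P v) alpha" by blast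
      then have "card {w\<in>V. k w = k v} = 0" using a0 by (simp add: Kset_def)
      then have "{w\<in>V. k w = k v} = {}" using Nil.prems(3) by simp
      then show False using v by blast
    qed
    moreover have "\<not> (\<forall>n\<in>set ns. n = 0)"
    proof
      assume z: "\<forall>n\<in>set ns. n = 0"
      have p: "P v < length ns" using v Nil.prems(4) by blast
      then have "card {w\<in>V. P w = P v} = 0" using z Nil.prems(5) by (simp add: nth_mem)
      then have "{w\<in>V. P w = P v} = {}" using Nil.prems(3) by simp
      then show False using v by blast
    qed
    ultimately show ?thesis by simp
  qed
next
  case (Cons i ks)
  define a where "a = alpha i"
  define alpha' where "alpha' = alpha(i := 0)"
  have ai: "alpha i \<noteq> 0" using Cons.prems(2) by simp
  have iks: "i \<notin> set ks" using Cons.prems(1) by simp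
  have fin: "finite {i. alpha i \<noteq> 0}" using Cons.prems(2) by (simp add: finite_subset)
  have supp': "\<forall>j. (alpha' j \<noteq> 0) = (j \<in> set ks)" using Cons.prems(2) iks by (auto simp: alpha'_def)
  have mapeq: "map alpha' ks = map alpha ks" using iks by (auto simp: alpha'_def)
  define CC where "CC = {C. C \<subseteq> V \<and> card C = alpha i \<and> (\<forall>u\<in>C. \<forall>v\<in>C. P u = P v)}"
  define CP where "CP p = {C. C \<subseteq> {v\<in>V. P v = p} \<and> card C = a}" for p
  have step: "card (Kset V (\<lambda>u v. P u \<noteq> P v) alpha) =
      (\<Sum>C\<in>CC. card (Kset (V - C) (\<lambda>u v. P u \<noteq> P v) alpha'))"
    unfolding CC_def alpha'_def by (rule chrom_step[OF Cons.prems(3) fin ai])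
  have CCeq: "CC = (\<Union>p\<in>{..<length ns}. CP p)"
  proof
    show "CC \<subseteq> (\<Union>p\<in>{..<length ns}. CP p)"
    proof
      fix C assume C: "C \<in> CC"
      then have CV: "C \<subseteq> V" "card C = a" "\<forall>u\<in>C. \<forall>v\<in>C. P u = P v" unfolding CC_def a_def by blast+
      then have "C \<noteq> {}" using ai a_def by auto
      then obtain u where u: "u \<in> C" by blast
      then have "P u < length ns" using CV(1) Cons.prems(4) by blast
      moreover have "C \<subseteq> {v\<in>V. P v = P u}" using CV(1) CV(3) u by blast
      ultimately show "C \<in> (\<Union>p\<in>{..<length ns}. CP p)" using CV(2) unfolding CP_def by blast
    qed
    show "(\<Union>p\<in>{..<length ns}. CP p) \<subseteq> CC"
    proof
      fix C assume "C \<in> (\<Union>p\<in>{..<length ns}. CP p)"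
      then obtain p where "C \<subseteq> {v\<in>V. P v = p}" "card C = a" unfolding CP_def by blast
      then show "C \<in> CC" unfolding CC_def a_def by blast
    qed
  qed
  have finCP: "finite (CP p)" for p
    unfolding CP_def using Cons.prems(3) by (auto intro: finite_subset[of _ "Pow V"])
  have disj: "CP p \<inter> CP q = {}" if "p \<noteq> q" for p q
  proof -
    have "C = {}" if "C \<in> CP p" "C \<in> CP q" for C using that \<open>p \<noteq> q\<close> unfolding CP_def by blast
    moreover have "{} \<notin> CP p" using ai unfolding CP_def a_def by auto
    ultimately show ?thesis by blast
  qed
  have inner: "card (Kset (V - C) (\<lambda>u v. P u \<noteq> P v) alpha') = cf (ns[p := ns!p - a]) (map alpha ks)"
    if p: "p < length ns" and C: "C \<in> CP p" for p C
  proof -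
    have CV: "C \<subseteq> V" "\<forall>v\<in>C. P v = p" "card C = a" using C unfolding CP_def by blast+
    have finC: "finite C" using CV(1) Cons.prems(3) finite_subset by blast
    have "card {v\<in>V - C. P v = q} = ns[p := ns!p - a] ! q" if q: "q < length ns" for q
    proof (cases "q = p")
      case True
      have "{v\<in>V - C. P v = q} = {v\<in>V. P v = p} - C" using True by blast
      moreover have "C \<subseteq> {v\<in>V. P v = p}" using CV by blast
      ultimately have "card {v\<in>V - C. P v = q} = card {v\<in>V. P v = p} - card C"
        using finC by (simp add: card_Diff_subset)
      then show ?thesis using True p Cons.prems(5) CV(3) by simp
    next
      case False
      have "{v\<in>V - C. P v = q} = {v\<in>V. P v = q}" using False CV(2) by blast
      then show ?thesis using False q Cons.prems(5) by simp
    qed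
    then have h5: "\<forall>q<length (ns[p := ns!p - a]). card {v\<in>V - C. P v = q} = ns[p := ns!p - a] ! q" by simp
    have h4: "\<forall>v\<in>V - C. P v < length (ns[p := ns!p - a])" using Cons.prems(4) by simp
    have "card (Kset (V - C) (\<lambda>u v. P u \<noteq> P v) alpha') = cf (ns[p := ns!p - a]) (map alpha' ks)"
      by (rule Cons.IH) (use Cons.prems(1) supp' Cons.prems(3) h4 h5 in auto)
    then show ?thesis using mapeq by simp
  qed
  have "(\<Sum>C\<in>CC. card (Kset (V - C) (\<lambda>u v. P u \<noteq> P v) alpha')) =
      (\<Sum>p<length ns. \<Sum>C\<in>CP p. card (Kset (V - C) (\<lambda>u v. P u \<noteq> P v) alpha'))"
    unfolding CCeq by (rule sum.UNION_disjoint) (use finCP disj in auto)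
  also have "\<dots> = (\<Sum>p<length ns. \<Sum>C\<in>CP p. cf (ns[p := ns!p - a]) (map alpha ks))"
    by (rule sum.cong[OF refl], rule sum.cong[OF refl]) (use inner in auto)
  also have "\<dots> = (\<Sum>p<length ns. (ns!p choose a) * cf (ns[p := ns!p - a]) (map alpha ks))"
  proof (rule sum.cong[OF refl])
    fix p assume "p \<in> {..<length ns}"
    then have "card {v\<in>V. P v = p} = ns!p" using Cons.prems(5) by simp
    moreover have "card (CP p) = card {v\<in>V. P v = p} choose a"
      unfolding CP_def by (rule n_subsets) (use Cons.prems(3) in auto)
    ultimately show "(\<Sum>C\<in>CP p. cf (ns[p := ns!p - a]) (map alpha ks)) = (ns!p choose a) * cf (ns[p := ns!p - a]) (map alpha ks)"
      by simp
  qed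
  also have "\<dots> = cf ns (map alpha (i # ks))"
    by (simp only: list.map cf_Cons_sum a_def)
  finally show ?case using step by simp
qed

definition Eset :: "nat list \<Rightarrow> (nat \<Rightarrow> nat) \<Rightarrow> nat set list set" where
  "Eset lam alpha = {Ss :: nat set list. length Ss = length lam \<and>
      (\<forall>j<length lam. finite (Ss ! j) \<and> card (Ss ! j) = lam ! j) \<and>
      (\<forall>i. card {j. j < length lam \<and> i \<in> Ss ! j} = alpha i)}"

lemma e_Eset: "e_coeff lam alpha = card (Eset lam alpha)"
  by (simp add: e_coeff_def Eset_def)

lemma blists_iff: "bs \<in> set (blists lam a) \<longleftrightarrow>
   length bs = length lam \<and> length (filter id bs) = a \<and> list_all2 (\<lambda>b x. b \<longrightarrow> 0 < x) bs lam"
proof (induction lam arbitrary: a bs)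
  case Nil
  then show ?case by auto
next
  case (Cons x xs)
  show ?case
  proof (cases bs)
    case Nil
    then show ?thesis by auto
  next
    case (Cons b bs')
    show ?thesis
    proof (cases b)
      case True
      then show ?thesis using Cons Cons.IH by auto
    next
      case False
      then show ?thesis using Cons Cons.IH by auto
    qed
  qed
qed

lemma blists_iff2: "bs \<in> set (blists lam a) \<longleftrightarrow>
   length bs = length lam \<and> card {j. j < length lam \<and> bs ! j} = a \<and> (\<forall>j<length lam. bs ! j \<longrightarrow> 0 < lam ! j)"
  unfolding blists_iff length_filter_conv_card list_all2_conv_all_nth by auto

lemma distinct_blists: "distinct (blists lam a)"
proof (induction lam arbitrary: a)
  case Nil
  then show ?case by simp
next
  case (Cons x xs)
  then show ?case by (auto simp: distinct_map inj_on_def)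
qed

lemma Eset_sub: "Eset lam alpha \<subseteq> {Ss. set Ss \<subseteq> Pow {i. alpha i \<noteq> 0} \<and> length Ss = length lam}"
proof
  fix Ss assume Ss: "Ss \<in> Eset lam alpha"
  have len: "length Ss = length lam" and cnt: "\<And>i. card {j. j < length lam \<and> i \<in> Ss ! j} = alpha i"
    using Ss unfolding Eset_def by blast+
  have "k \<in> {i. alpha i \<noteq> 0}" if "S \<in> set Ss" "k \<in> S" for S k
  proof -
    from that(1) obtain j where j: "j < length Ss" "Ss ! j = S" unfolding in_set_conv_nth by blast
    have "j \<in> {j. j < length lam \<and> k \<in> Ss ! j}" using j that(2) len by simp
    then have ne: "{j. j < length lam \<and> k \<in> Ss ! j} \<noteq> {}" by blast
    have "finite {j. j < length lam \<and> k \<in> Ss ! j}" by simp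
    then have "card {j. j < length lam \<and> k \<in> Ss ! j} \<noteq> 0" using ne by simp
    then show ?thesis using cnt[of k] by simp
  qed
  then have "set Ss \<subseteq> Pow {i. alpha i \<noteq> 0}" by blast
  then show "Ss \<in> {Ss. set Ss \<subseteq> Pow {i. alpha i \<noteq> 0} \<and> length Ss = length lam}"
    using len by blast
qed

lemma Eset_finite: "finite {i. alpha i \<noteq> 0} \<Longrightarrow> finite (Eset lam alpha)"
  by (rule finite_subset[OF Eset_sub]) (rule finite_lists_length_eq, simp)

lemma Eset_inf: assumes "infinite {i. alpha i \<noteq> 0}" shows "Eset lam alpha = {}"
proof (rule ccontr)
  assume "Eset lam alpha \<noteq> {}"
  then obtain Ss where Ss: "Ss \<in> Eset lam alpha" by blast
  have "{i. alpha i \<noteq> 0} \<subseteq> \<Union> (set Ss)"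
  proof
    fix i assume "i \<in> {i. alpha i \<noteq> 0}"
    then have "card {j. j < length lam \<and> i \<in> Ss ! j} \<noteq> 0" using Ss by (simp add: Eset_def)
    then obtain j where "j < length lam" "i \<in> Ss ! j" by (metis (mono_tags, lifting) card.empty empty_Collect_eq)
    then show "i \<in> \<Union> (set Ss)" using Ss by (auto simp: Eset_def)
  qed
  moreover have "finite (\<Union> (set Ss))"
  proof (rule finite_Union)
    show "finite (set Ss)" by simp
    show "finite S" if "S \<in> set Ss" for S
    proof -
      from that obtain j where "j < length Ss" "Ss ! j = S" unfolding in_set_conv_nth by blast
      moreover have "\<forall>j<length lam. finite (Ss ! j)" using Ss unfolding Eset_def by blast
      moreover have "length Ss = length lam" using Ss unfolding Eset_def by blast
      ultimately show ?thesis by metis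
    qed
  qed
  ultimately have "finite {i. alpha i \<noteq> 0}" by (rule finite_subset)
  then show False using assms by simp
qed

lemma Eset_zero: assumes "\<And>i. alpha i = 0"
  shows "card (Eset lam alpha) = (if \<forall>n\<in>set lam. n = 0 then 1 else 0)"
proof -
  have allempty: "Ss ! j = {}" if "Ss \<in> Eset lam alpha" "j < length lam" for Ss j
  proof (rule ccontr)
    assume "Ss ! j \<noteq> {}"
    then obtain k where "k \<in> Ss ! j" by blast
    then have "j \<in> {j. j < length lam \<and> k \<in> Ss ! j}" using that by simp
    moreover have "finite {j. j < length lam \<and> k \<in> Ss ! j}" by simp
    moreover have "card {j. j < length lam \<and> k \<in> Ss ! j} = 0" using that(1) assms by (simp add: Eset_def)
    ultimately show False by auto
  qed
  show ?thesis
  proof (cases "\<forall>n\<in>set lam. n = 0")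
    case True
    have "Eset lam alpha = {replicate (length lam) {}}"
    proof
      show "Eset lam alpha \<subseteq> {replicate (length lam) {}}"
      proof
        fix Ss assume Ss: "Ss \<in> Eset lam alpha"
        then have "Ss = replicate (length lam) {}"
          using allempty[OF Ss] by (intro nth_equalityI) (auto simp: Eset_def)
        then show "Ss \<in> {replicate (length lam) {}}" by simp
      qed
      show "{replicate (length lam) {}} \<subseteq> Eset lam alpha"
        using True assms by (auto simp: Eset_def nth_mem)
    qed
    then show ?thesis using True by simp
  next
    case False
    then obtain j where j: "j < length lam" "lam ! j \<noteq> 0" by (auto simp: in_set_conv_nth)
    have "Eset lam alpha = {}"
    proof (rule ccontr)
      assume "Eset lam alpha \<noteq> {}"
      then obtain Ss where Ss: "Ss \<in> Eset lam alpha" by blast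
      then have "card (Ss ! j) = lam ! j" using j by (simp add: Eset_def)
      then show False using allempty[OF Ss j(1)] j(2) by simp
    qed
    then show ?thesis using False by simp
  qed
qed

lemma dec_length: "length bs = length lam \<Longrightarrow> length (dec lam bs) = length lam"
  by (simp add: dec_def)

lemma dec_nth: "length bs = length lam \<Longrightarrow> j < length lam \<Longrightarrow> dec lam bs ! j = (if bs ! j then lam ! j - 1 else lam ! j)"
  by (simp add: dec_def)

lemma e_step:
  assumes fin: "finite {i. alpha i \<noteq> 0}" and ai: "alpha i \<noteq> 0"
  shows "card (Eset lam alpha) = (\<Sum>bs\<in>set (blists lam (alpha i)). card (Eset (dec lam bs) (alpha(i := 0))))"
proof -
  define n where "n = length lam"
  define A where "A = Eset lam alpha"
  define BB where "BB = set (blists lam (alpha i))"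
  define fib where "fib bs = {Ss\<in>A. map (\<lambda>S. i \<in> S) Ss = bs}" for bs
  have finA: "finite A" unfolding A_def using Eset_finite[OF fin] .
  have memA: "length Ss = n" "\<And>j. j < n \<Longrightarrow> finite (Ss ! j)" "\<And>j. j < n \<Longrightarrow> card (Ss ! j) = lam ! j"
    "\<And>k. card {j. j < n \<and> k \<in> Ss ! j} = alpha k" if "Ss \<in> A" for Ss
    using that unfolding A_def Eset_def n_def by blast+
  have Aeq: "A = (\<Union>bs\<in>BB. fib bs)"
  proof
    show "A \<subseteq> (\<Union>bs\<in>BB. fib bs)"
    proof
      fix Ss assume Ss: "Ss \<in> A"
      define bs where "bs = map (\<lambda>S. i \<in> S) Ss"
      have l: "length bs = length lam" using memA(1)[OF Ss] by (simp add: bs_def n_def)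
      have "{j. j < length lam \<and> bs ! j} = {j. j < n \<and> i \<in> Ss ! j}"
        using memA(1)[OF Ss] by (auto simp: bs_def n_def)
      then have c: "card {j. j < length lam \<and> bs ! j} = alpha i" using memA(4)[OF Ss] by simp
      have p: "0 < lam ! j" if "j < length lam" "bs ! j" for j
      proof -
        have j: "j < n" using that by (simp add: n_def)
        have "i \<in> Ss ! j" using that memA(1)[OF Ss] by (simp add: bs_def n_def)
        then have "Ss ! j \<noteq> {}" by blast
        then have "card (Ss ! j) \<noteq> 0" using memA(2)[OF Ss j] by simp
        then show ?thesis using memA(3)[OF Ss j] by simp
      qed
      have "bs \<in> BB" unfolding BB_def blists_iff2 using l c p by blast
      then show "Ss \<in> (\<Union>bs\<in>BB. fib bs)" using Ss unfolding fib_def bs_def by blast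
    qed
  qed (unfold fib_def, blast)
  have "card A = (\<Sum>bs\<in>BB. card (fib bs))"
    unfolding Aeq by (rule card_UN_disjoint) (auto simp: BB_def fib_def intro: finite_subset[OF _ finA])
  also have "\<dots> = (\<Sum>bs\<in>BB. card (Eset (dec lam bs) (alpha(i := 0))))"
  proof (rule sum.cong[OF refl])
    fix bs assume bs: "bs \<in> BB"
    have bl: "length bs = n" and bc: "card {j. j < n \<and> bs ! j} = alpha i"
      and bp: "\<And>j. j < n \<Longrightarrow> bs ! j \<Longrightarrow> 0 < lam ! j"
      using bs unfolding BB_def blists_iff2 n_def by blast+
    define B where "B = Eset (dec lam bs) (alpha(i := 0))"
    have dl: "length (dec lam bs) = n" using bl by (simp add: dec_length n_def)
    have dn: "\<And>j. j < n \<Longrightarrow> dec lam bs ! j = (if bs ! j then lam ! j - 1 else lam ! j)"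
      using bl by (simp add: dec_nth n_def)
    have memB: "length Ss = n" "\<And>j. j < n \<Longrightarrow> finite (Ss ! j)" "\<And>j. j < n \<Longrightarrow> card (Ss ! j) = dec lam bs ! j"
      "\<And>k. card {j. j < n \<and> k \<in> Ss ! j} = (alpha(i := 0)) k" if "Ss \<in> B" for Ss
      using that unfolding B_def Eset_def dl by blast+
    define f where "f Ss = map (\<lambda>S. S - {i}) Ss" for Ss :: "nat set list"
    define g where "g Ss = map (\<lambda>(S, b). if b then insert i S else S) (zip Ss bs)" for Ss :: "nat set list"
    have "bij_betw f (fib bs) B"
    proof (rule bij_betwI[where g = g])
      show "f \<in> fib bs \<rightarrow> B"
      proof
        fix Ss assume Ss: "Ss \<in> fib bs"
        then have SA: "Ss \<in> A" and Sb: "map (\<lambda>S. i \<in> S) Ss = bs" unfolding fib_def by blast+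
        have len: "length Ss = n" using memA(1)[OF SA] .
        have bj: "bs ! j = (i \<in> Ss ! j)" if "j < n" for j using Sb that len by auto
        have l1: "length (f Ss) = length (dec lam bs)" using len dl by (simp add: f_def)
        have l2: "finite (f Ss ! j) \<and> card (f Ss ! j) = dec lam bs ! j" if j: "j < length (dec lam bs)" for j
        proof -
          have j': "j < n" using j dl by simp
          have "f Ss ! j = Ss ! j - {i}" using j' len by (simp add: f_def)
          moreover have "card (Ss ! j - {i}) = (if i \<in> Ss ! j then card (Ss ! j) - 1 else card (Ss ! j))"
            using memA(2)[OF SA j'] by (simp add: card_Diff_singleton_if)
          ultimately show ?thesis using memA(2,3)[OF SA j'] dn[OF j'] bj[OF j'] by simp
        qed
        have l3: "card {j. j < length (dec lam bs) \<and> k \<in> f Ss ! j} = (alpha(i := 0)) k" for k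
        proof (cases "k = i")
          case True
          have "{j. j < length (dec lam bs) \<and> k \<in> f Ss ! j} = {}" using True len dl by (auto simp: f_def)
          then show ?thesis using True by simp
        next
          case False
          have "{j. j < length (dec lam bs) \<and> k \<in> f Ss ! j} = {j. j < n \<and> k \<in> Ss ! j}"
            using False len dl by (auto simp: f_def)
          then show ?thesis using False memA(4)[OF SA, of k] by simp
        qed
        show "f Ss \<in> B" unfolding B_def Eset_def using l1 l2 l3 by blast
      qed
      show "g \<in> B \<rightarrow> fib bs"
      proof
        fix Ss assume SB: "Ss \<in> B"
        have len: "length Ss = n" using memB(1)[OF SB] .
        have noi: "i \<notin> Ss ! j" if "j < n" for j
        proof
          assume "i \<in> Ss ! j"
          then have "j \<in> {j. j < n \<and> i \<in> Ss ! j}" using that by simp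
          then have ne: "{j. j < n \<and> i \<in> Ss ! j} \<noteq> {}" by blast
          have "card {j. j < n \<and> i \<in> Ss ! j} = 0" using memB(4)[OF SB, of i] by simp
          then show False using ne by simp
        qed
        have gl: "length (g Ss) = n" using len bl by (simp add: g_def)
        have gn: "g Ss ! j = (if bs ! j then insert i (Ss ! j) else Ss ! j)" if "j < n" for j
          using that len bl by (simp add: g_def)
        have c2: "finite (g Ss ! j) \<and> card (g Ss ! j) = lam ! j" if j: "j < length lam" for j
        proof -
          have j': "j < n" using j by (simp add: n_def)
          show ?thesis
          proof (cases "bs ! j")
            case True
            have "card (insert i (Ss ! j)) = Suc (card (Ss ! j))"
              using memB(2)[OF SB j'] noi[OF j'] by simp
            then show ?thesis using True gn[OF j'] memB(2,3)[OF SB j'] dn[OF j'] bp[OF j' True] by simp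
          next
            case False
            then show ?thesis using gn[OF j'] memB(2,3)[OF SB j'] dn[OF j'] by simp
          qed
        qed
        have c3: "card {j. j < length lam \<and> k \<in> g Ss ! j} = alpha k" for k
        proof (cases "k = i")
          case True
          have "{j. j < length lam \<and> k \<in> g Ss ! j} = {j. j < n \<and> bs ! j}"
            using True gn noi by (auto simp: n_def split: if_splits)
          then show ?thesis using True bc by simp
        next
          case False
          have "{j. j < length lam \<and> k \<in> g Ss ! j} = {j. j < n \<and> k \<in> Ss ! j}"
            using False gn by (auto simp: n_def split: if_splits)
          then show ?thesis using False memB(4)[OF SB, of k] by simp
        qed
        have gA: "g Ss \<in> A" unfolding A_def Eset_def using gl c2 c3 by (simp add: n_def)
        have "map (\<lambda>S. i \<in> S) (g Ss) = bs"
          by (rule nth_equalityI) (use gl bl gn noi in auto)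
        then show "g Ss \<in> fib bs" using gA unfolding fib_def by blast
      qed
      show "g (f Ss) = Ss" if "Ss \<in> fib bs" for Ss
      proof -
        have SA: "Ss \<in> A" and Sb: "map (\<lambda>S. i \<in> S) Ss = bs" using that unfolding fib_def by blast+
        have len: "length Ss = n" using memA(1)[OF SA] .
        have bj: "bs ! j = (i \<in> Ss ! j)" if "j < n" for j using Sb that len by auto
        show ?thesis
          by (rule nth_equalityI) (use len bl bj in \<open>auto simp: f_def g_def\<close>)
      qed
      show "f (g Ss) = Ss" if "Ss \<in> B" for Ss
      proof -
        have len: "length Ss = n" using memB(1)[OF that] .
        have noi: "i \<notin> Ss ! j" if "j < n" for j
        proof
          assume "i \<in> Ss ! j"
          then have "j \<in> {j. j < n \<and> i \<in> Ss ! j}" using that by simp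
          then have ne: "{j. j < n \<and> i \<in> Ss ! j} \<noteq> {}" by blast
          have "card {j. j < n \<and> i \<in> Ss ! j} = 0" using memB(4)[OF \<open>Ss \<in> B\<close>, of i] by simp
          then show False using ne by simp
        qed
        show ?thesis
          by (rule nth_equalityI) (use len bl noi in \<open>auto simp: f_def g_def\<close>)
      qed
    qed
    then show "card (fib bs) = card (Eset (dec lam bs) (alpha(i := 0)))"
      unfolding B_def by (rule bij_betw_same_card)
  qed
  finally show ?thesis unfolding A_def BB_def .
qed

lemma e_ef:
  assumes "distinct ks" "\<forall>i. (alpha i \<noteq> 0) = (i \<in> set ks)"
  shows "card (Eset lam alpha) = ef lam (map alpha ks)"
  using assms
proof (induction ks arbitrary: alpha lam)
  case Nil
  then have "\<And>i. alpha i = 0" by simp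
  then show ?case by (simp add: Eset_zero)
next
  case (Cons i ks)
  have ai: "alpha i \<noteq> 0" using Cons.prems(2) by simp
  have iks: "i \<notin> set ks" using Cons.prems(1) by simp
  have fin: "finite {i. alpha i \<noteq> 0}" using Cons.prems(2) by (simp add: finite_subset)
  have supp': "\<forall>j. ((alpha(i := 0)) j \<noteq> 0) = (j \<in> set ks)" using Cons.prems(2) iks by auto
  have mapeq: "map (alpha(i := 0)) ks = map alpha ks" using iks by auto
  have "card (Eset lam alpha) = (\<Sum>bs\<in>set (blists lam (alpha i)). card (Eset (dec lam bs) (alpha(i := 0))))"
    by (rule e_step[OF fin ai])
  also have "\<dots> = (\<Sum>bs\<in>set (blists lam (alpha i)). ef (dec lam bs) (map alpha ks))"
  proof (rule sum.cong[OF refl])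
    fix bs
    have "card (Eset (dec lam bs) (alpha(i := 0))) = ef (dec lam bs) (map (alpha(i := 0)) ks)"
      by (rule Cons.IH) (use Cons.prems(1) supp' in auto)
    then show "card (Eset (dec lam bs) (alpha(i := 0))) = ef (dec lam bs) (map alpha ks)"
      unfolding mapeq .
  qed
  also have "\<dots> = sum_list (map (\<lambda>bs. ef (dec lam bs) (map alpha ks)) (blists lam (alpha i)))"
    by (rule sum_list_distinct_conv_sum_set[symmetric, OF distinct_blists])
  also have "\<dots> = ef lam (map alpha (i # ks))" by simp
  finally show ?case .
qed

lemma len_le_sum: "\<forall>x\<in>set xs. 0 < (x::nat) \<Longrightarrow> length xs \<le> sum_list xs"
  by (induction xs) auto

lemma finite_partitions: "finite (partitions n)"
proof (rule finite_subset)
  show "partitions n \<subseteq> {xs. set xs \<subseteq> {..n} \<and> length xs \<le> n}"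
  proof
    fix xs assume "xs \<in> partitions n"
    then have p: "\<forall>x\<in>set xs. 0 < x" "sum_list xs = n" by (auto simp: partitions_def)
    have "set xs \<subseteq> {..n}" using p(2) member_le_sum_list[of _ xs] by auto
    moreover have "length xs \<le> n" using len_le_sum[OF p(1)] p(2) by simp
    ultimately show "xs \<in> {xs. set xs \<subseteq> {..n} \<and> length xs \<le> n}" by blast
  qed
  show "finite {xs. set xs \<subseteq> {..n} \<and> length xs \<le> n}"
    by (rule finite_lists_length_le) simp
qed

lemma cf_sum: "cf ns xs \<noteq> 0 \<Longrightarrow> sum_list xs = sum_list ns"
proof (induction xs arbitrary: ns)
  case Nil
  then show ?case by (auto split: if_splits)
next
  case (Cons a as)
  from Cons.prems obtain p where p: "p < length ns" "a \<le> ns ! p" "cf (ns[p := ns!p - a]) as \<noteq> 0"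
    by (auto simp: sum_upt_list split: if_splits)
  have "sum_list as = sum_list (ns[p := ns!p - a])" using Cons.IH[OF p(3)] .
  also have "\<dots> = sum_list ns + (ns!p - a) - ns!p" using p(1) by (rule sum_list_update)
  finally have "sum_list as = sum_list ns + (ns!p - a) - ns!p" .
  moreover have "ns!p \<le> sum_list ns" using p(1) by (simp add: member_le_sum_list)
  ultimately show ?case using p(2) by simp
qed

lemma dec_sum: "bs \<in> set (blists lam a) \<Longrightarrow> sum_list (dec lam bs) + a = sum_list lam"
proof (induction lam arbitrary: a bs)
  case Nil
  then show ?case by (auto simp: dec_def split: if_splits)
next
  case (Cons x xs)
  from Cons.prems consider (F) bs' where "bs = False # bs'" "bs' \<in> set (blists xs a)"
    | (T) bs' where "bs = True # bs'" "0 < x" "0 < a" "bs' \<in> set (blists xs (a - 1))"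
    by (auto split: if_splits)
  then show ?case
  proof cases
    case F
    then show ?thesis using Cons.IH[OF F(2)] by (simp add: dec_def)
  next
    case T
    then show ?thesis using Cons.IH[OF T(4)] by (simp add: dec_def)
  qed
qed

lemma ef_sum: "ef lam xs \<noteq> 0 \<Longrightarrow> sum_list xs = sum_list lam"
proof (induction xs arbitrary: lam)
  case Nil
  then show ?case by (auto split: if_splits)
next
  case (Cons a as)
  from Cons.prems obtain bs where bs: "bs \<in> set (blists lam a)" "ef (dec lam bs) as \<noteq> 0"
    by auto
  show ?case using Cons.IH[OF bs(2)] dec_sum[OF bs(1)] by simp
qed

lemma compsf_complete: "\<forall>x\<in>set xs. 0 < x \<Longrightarrow> sum_list xs = n \<Longrightarrow> length xs \<le> f \<Longrightarrow> xs \<in> set (compsf f n)"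
proof (induction xs arbitrary: n f)
  case Nil
  then show ?case by (cases f) auto
next
  case (Cons x xs)
  then obtain f' where f: "f = Suc f'" by (cases f) auto
  have x: "0 < x" "x \<le> n" using Cons.prems by auto
  have "xs \<in> set (compsf f' (n - x))" using Cons.prems f by (intro Cons.IH) auto
  then show ?case using f x by (cases "x = n") auto
qed

lemma sum_list_zero_int: "(\<forall>x\<in>set L. f x = 0) \<Longrightarrow> sum_list (map f L) = (0::int)"
  by (induction L) auto

definition cL :: "(nat list \<times> int) list \<Rightarrow> nat list \<Rightarrow> int" where
  "cL L mu = (case map_of L mu of Some v \<Rightarrow> v | None \<Rightarrow> 0)"

lemma sum_cL_list: "distinct (map fst L) \<Longrightarrow> (\<Sum>mu\<in>set (map fst L). cL L mu * f mu) = sum_list (map (\<lambda>(mu, v). v * f mu) L)"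
proof (induction L)
  case Nil
  then show ?case by simp
next
  case (Cons kv L)
  obtain k v where kv: "kv = (k, v)" by (cases kv)
  have nk: "k \<notin> set (map fst L)" using Cons.prems kv by simp
  have "(\<Sum>mu\<in>set (map fst (kv # L)). cL (kv # L) mu * f mu) = cL (kv # L) k * f k + (\<Sum>mu\<in>set (map fst L). cL (kv # L) mu * f mu)"
    using nk kv by simp
  also have "(\<Sum>mu\<in>set (map fst L). cL (kv # L) mu * f mu) = (\<Sum>mu\<in>set (map fst L). cL L mu * f mu)"
    by (rule sum.cong[OF refl]) (use nk kv in \<open>auto simp: cL_def\<close>)
  also have "cL (kv # L) k = v" using kv by (simp add: cL_def)
  finally show ?case using Cons.IH Cons.prems kv by simp
qed

lemma sum_cL: assumes "finite P" "set (map fst L) \<subseteq> P" "distinct (map fst L)"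
  shows "(\<Sum>mu\<in>P. cL L mu * f mu) = sum_list (map (\<lambda>(mu, v). v * f mu) L)"
proof -
  have "(\<Sum>mu\<in>P. cL L mu * f mu) = (\<Sum>mu\<in>set (map fst L). cL L mu * f mu)"
  proof (rule sum.mono_neutral_right[OF assms(1) assms(2)])
    show "\<forall>i\<in>P - set (map fst L). cL L i * f i = 0"
    proof
      fix i assume "i \<in> P - set (map fst L)"
      then have "map_of L i = None" by (simp add: map_of_eq_None_iff)
      then show "cL L i * f i = 0" by (simp add: cL_def)
    qed
  qed
  also have "\<dots> = sum_list (map (\<lambda>(mu, v). v * f mu) L)" using assms(3) by (rule sum_cL_list)
  finally show ?thesis .
qed

lemma cL_nonneg: "\<forall>(mu, v)\<in>set L. 0 \<le> v \<Longrightarrow> 0 \<le> cL L mu"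
  by (auto simp: cL_def split: option.splits dest: map_of_SomeD)

lemma tri_V_parts:
  "{v\<in>tri_V r s t. fst v = 0} = {0} \<times> {..<r}"
  "{v\<in>tri_V r s t. fst v = 1} = {1} \<times> {..<s}"
  "{v\<in>tri_V r s t. fst v = 2} = {2} \<times> {..<t}"
  by (auto simp: tri_V_def)

lemma tri_V_eq: "tri_V r s t = ({0} \<times> {..<r}) \<union> ({1} \<times> {..<s}) \<union> ({2} \<times> {..<t})"
  by (auto simp: tri_V_def)

lemma tri_V_finite: "finite (tri_V r s t)"
  unfolding tri_V_eq by simp

lemma tri_V_card: "card (tri_V r s t) = r + s + t"
proof -
  have d1: "({0::nat} \<times> {..<r}) \<inter> ({1} \<times> {..<s}) = {}" by auto
  have d2: "(({0::nat} \<times> {..<r}) \<union> ({1} \<times> {..<s})) \<inter> ({2} \<times> {..<t}) = {}" by auto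
  have "card (({0::nat} \<times> {..<r}) \<union> ({1} \<times> {..<s}) \<union> ({2} \<times> {..<t}))
      = card (({0::nat} \<times> {..<r}) \<union> ({1} \<times> {..<s})) + card ({2::nat} \<times> {..<t})"
    by (rule card_Un_disjoint) (use d2 in auto)
  also have "card (({0::nat} \<times> {..<r}) \<union> ({1} \<times> {..<s})) = card ({0::nat} \<times> {..<r}) + card ({1::nat} \<times> {..<s})"
    by (rule card_Un_disjoint) (use d1 in auto)
  finally show ?thesis unfolding tri_V_eq by (simp add: card_cartesian_product)
qed

lemma tri_V_fst: "\<forall>v\<in>tri_V r s t. fst v < 3"
  by (auto simp: tri_V_def)

lemma tri_E_eq: "tri_E = (\<lambda>u v. fst u \<noteq> fst v)"
  by (simp add: tri_E_def fun_eq_iff)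

lemma tri_parts_card: "\<forall>p<length [r, s, t]. card {v \<in> tri_V r s t. fst v = p} = [r, s, t] ! p"
proof (intro allI impI)
  fix p assume "p < length [r, s, t]"
  then have "p = 0 \<or> p = 1 \<or> p = 2" by auto
  moreover have "card {v \<in> tri_V r s t. fst v = 0} = r" unfolding tri_V_parts by (simp add: card_cartesian_product)
  moreover have "card {v \<in> tri_V r s t. fst v = 1} = s" unfolding tri_V_parts by (simp add: card_cartesian_product)
  moreover have "card {v \<in> tri_V r s t. fst v = 2} = t" unfolding tri_V_parts by (simp add: card_cartesian_product)
  ultimately show "card {v \<in> tri_V r s t. fst v = p} = [r, s, t] ! p" by auto
qed

lemma tri_fst_len: "\<forall>v\<in>tri_V r s t. fst v < length [r, s, t]"
  by (auto simp: tri_V_def)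

lemma chrom_tri: assumes "distinct ks" "\<forall>i. (alpha i \<noteq> 0) = (i \<in> set ks)"
  shows "chrom_coeff (tri_V r s t) tri_E alpha = cf [r, s, t] (map alpha ks)"
proof -
  have "card (Kset (tri_V r s t) (\<lambda>u v. fst u \<noteq> fst v) alpha) = cf [r, s, t] (map alpha ks)"
    by (rule chrom_cf[where P = fst, OF assms tri_V_finite tri_fst_len tri_parts_card])
  then show ?thesis unfolding chrom_Kset tri_E_eq .
qed

lemma epos_from_check:
  assumes N: "N = r + s + t"
    and chk: "\<forall>xs\<in>set (compsf N N). int (cf [r, s, t] xs) = sum_list (map (\<lambda>(mu, v). v * int (ef mu xs)) L)"
    and Lp: "\<forall>(mu, v)\<in>set L. mu \<in> partitions N \<and> 0 \<le> v"
    and Ld: "distinct (map fst L)"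
  shows "e_positive (tri_V r s t) tri_E"
  unfolding e_positive_def tri_V_card N[symmetric]
proof (intro exI[of _ "cL L"] conjI allI ballI)
  fix mu assume "mu \<in> partitions N"
  show "0 \<le> cL L mu" by (rule cL_nonneg) (use Lp in auto)
next
  fix alpha :: "nat \<Rightarrow> nat"
  have sub: "set (map fst L) \<subseteq> partitions N" using Lp by auto
  have sumL: "(\<Sum>mu\<in>partitions N. cL L mu * int (e_coeff mu alpha)) = sum_list (map (\<lambda>(mu, v). v * int (e_coeff mu alpha)) L)"
    by (rule sum_cL[OF finite_partitions sub Ld])
  show "int (chrom_coeff (tri_V r s t) tri_E alpha) = (\<Sum>mu\<in>partitions N. cL L mu * int (e_coeff mu alpha))"
  proof (cases "finite {i. alpha i \<noteq> 0}")
    case False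
    have "chrom_coeff (tri_V r s t) tri_E alpha = 0"
      unfolding chrom_Kset using Kset_inf[OF tri_V_finite False] by simp
    moreover have "e_coeff mu alpha = 0" for mu
      unfolding e_Eset using Eset_inf[OF False] by simp
    ultimately show ?thesis by simp
  next
    case True
    define ks where "ks = sorted_list_of_set {i. alpha i \<noteq> 0}"
    have ksd: "distinct ks" and kss: "\<forall>i. (alpha i \<noteq> 0) = (i \<in> set ks)"
      using True by (auto simp: ks_def)
    define xs where "xs = map alpha ks"
    have xpos: "\<forall>x\<in>set xs. 0 < x" using kss by (auto simp: xs_def)
    have ch: "chrom_coeff (tri_V r s t) tri_E alpha = cf [r, s, t] xs"
      unfolding xs_def by (rule chrom_tri[OF ksd kss])
    have ee: "e_coeff mu alpha = ef mu xs" for mu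
      unfolding xs_def e_Eset by (rule e_ef[OF ksd kss])
    have sumL2: "(\<Sum>mu\<in>partitions N. cL L mu * int (ef mu xs)) = sum_list (map (\<lambda>(mu, v). v * int (ef mu xs)) L)"
      by (rule sum_cL[OF finite_partitions sub Ld])
    show ?thesis
    proof (cases "sum_list xs = N")
      case True
      have "xs \<in> set (compsf N N)"
        by (rule compsf_complete[OF xpos True]) (use len_le_sum[OF xpos] True in simp)
      then have "int (cf [r, s, t] xs) = sum_list (map (\<lambda>(mu, v). v * int (ef mu xs)) L)"
        using chk by blast
      then show ?thesis unfolding ch ee sumL2 .
    next
      case False
      have "cf [r, s, t] xs = 0" using cf_sum[of "[r, s, t]" xs] False N by auto
      moreover have "sum_list (map (\<lambda>(mu, v). v * int (ef mu xs)) L) = 0"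
      proof -
        have "ef mu xs = 0" if "(mu, v) \<in> set L" for mu v
        proof -
          have "sum_list mu = N" using Lp that by (auto simp: partitions_def)
          then show ?thesis using ef_sum[of mu xs] False by auto
        qed
        then show ?thesis by (intro sum_list_zero_int) auto
      qed
      ultimately show ?thesis unfolding ch ee sumL2 by simp
    qed
  qed
qed

lemma cells_finite: "finite (cells lam)"
proof (rule finite_subset)
  show "cells lam \<subseteq> {..<length lam} \<times> {..<Suc (sum_list lam)}"
  proof
    fix c assume "c \<in> cells lam"
    then obtain i j where c: "c = (i, j)" "i < length lam" "j < lam ! i" by (auto simp: cells_def)
    have "lam ! i \<le> sum_list lam" using c(2) by (simp add: member_le_sum_list)
    then show "c \<in> {..<length lam} \<times> {..<Suc (sum_list lam)}" using c by auto
  qed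
qed simp

lemma ssyt_finite: assumes "finite {k. beta k \<noteq> 0}" shows "finite (ssyt lam beta)"
proof (rule finite_subset)
  show "ssyt lam beta \<subseteq> cells lam \<rightarrow>\<^sub>E {k. beta k \<noteq> 0}"
  proof
    fix T assume T: "T \<in> ssyt lam beta"
    have "T c \<in> {k. beta k \<noteq> 0}" if c: "c \<in> cells lam" for c
    proof -
      have "c \<in> {c' \<in> cells lam. T c' = T c}" using c by simp
      then have ne: "{c' \<in> cells lam. T c' = T c} \<noteq> {}" by blast
      have "finite {c' \<in> cells lam. T c' = T c}" using cells_finite by simp
      then have "card {c' \<in> cells lam. T c' = T c} \<noteq> 0" using ne by simp
      moreover have "card {c' \<in> cells lam. T c' = T c} = beta (T c)" using T unfolding ssyt_def by blast
      ultimately show ?thesis by simp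
    qed
    moreover have "T \<in> cells lam \<rightarrow>\<^sub>E UNIV" using T unfolding ssyt_def by blast
    ultimately show "T \<in> cells lam \<rightarrow>\<^sub>E {k. beta k \<noteq> 0}" by (auto simp: PiE_iff)
  qed
  show "finite (cells lam \<rightarrow>\<^sub>E {k. beta k \<noteq> 0})" using cells_finite assms by (rule finite_PiE)
qed

lemma cells_up: assumes "sorted_wrt (\<ge>) lam" "(Suc i, j) \<in> cells lam" shows "(i, j) \<in> cells lam"
proof -
  have "Suc i < length lam" "j < lam ! Suc i" using assms(2) by (auto simp: cells_def)
  moreover have "lam ! Suc i \<le> lam ! i" using assms(1) \<open>Suc i < length lam\<close> by (auto simp: sorted_wrt_iff_nth_less)
  ultimately show ?thesis by (auto simp: cells_def)
qed

lemma cells_left: "(i, j') \<in> cells lam \<Longrightarrow> j \<le> j' \<Longrightarrow> (i, j) \<in> cells lam"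
  by (auto simp: cells_def)

lemma ssyt_mono:
  assumes lam: "sorted_wrt (\<ge>) lam" and a01: "alpha 1 < alpha 0" and fin: "finite {k. beta k \<noteq> 0}"
    and b0: "beta 0 + 1 = alpha 0" and b1: "beta 1 = alpha 1 + 1"
    and bo: "\<And>k. k \<noteq> 0 \<Longrightarrow> k \<noteq> 1 \<Longrightarrow> beta k = alpha k"
  shows "card (ssyt lam alpha) \<le> card (ssyt lam beta)"
proof -
  define k0 where "k0 = alpha 0"
  define c0 where "c0 = (0::nat, k0 - 1)"
  define F where "F T = T(c0 := 1)" for T :: "nat \<times> nat \<Rightarrow> nat"
  have k0pos: "0 < k0" using a01 by (simp add: k0_def)
  have props: "T \<in> cells lam \<rightarrow>\<^sub>E UNIV"
      "\<And>i j. (i, Suc j) \<in> cells lam \<Longrightarrow> T (i, j) \<le> T (i, Suc j)"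
      "\<And>i j. (Suc i, j) \<in> cells lam \<Longrightarrow> T (i, j) < T (Suc i, j)"
      "\<And>k. card {c \<in> cells lam. T c = k} = alpha k" if "T \<in> ssyt lam alpha" for T
    using that unfolding ssyt_def by blast+
  have F2: "i = 0" if "T \<in> ssyt lam alpha" "(i, j) \<in> cells lam" "T (i, j) = 0" for T i j
  proof (cases i)
    case (Suc i')
    then have "T (i', j) < T (Suc i', j)" using props(3)[OF that(1)] that(2) by simp
    then show ?thesis using that(3) Suc by simp
  qed simp
  have F3: "T (i, j) \<le> T (i, j')" if "T \<in> ssyt lam alpha" "(i, j') \<in> cells lam" "j \<le> j'" for T i j j'
    using that(3,2)
  proof (induction j' rule: dec_induct)
    case base
    then show ?case by simp
  next
    case (step m)
    have "(i, m) \<in> cells lam" using step.prems cells_left[of i "Suc m" lam m] by simp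
    then have "T (i, j) \<le> T (i, m)" using step.IH by simp
    also have "T (i, m) \<le> T (i, Suc m)" using props(2)[OF that(1)] step.prems by simp
    finally show ?case .
  qed
  have zeros: "(\<forall>j<k0. (0, j) \<in> cells lam \<and> T (0, j) = 0) \<and> (\<forall>j. k0 \<le> j \<longrightarrow> (0, j) \<in> cells lam \<longrightarrow> T (0, j) \<noteq> 0)"
    if T: "T \<in> ssyt lam alpha" for T
  proof -
    define Z where "Z = {c \<in> cells lam. T c = 0}"
    have finZ: "finite Z" unfolding Z_def using cells_finite by simp
    have cZ: "card Z = k0" unfolding Z_def k0_def using props(4)[OF T] by simp
    have second: "\<forall>j. k0 \<le> j \<longrightarrow> (0, j) \<in> cells lam \<longrightarrow> T (0, j) \<noteq> 0"
    proof (intro allI impI notI)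
      fix j assume j: "k0 \<le> j" "(0, j) \<in> cells lam" "T (0, j) = 0"
      have "{0} \<times> {..j} \<subseteq> Z"
      proof
        fix c assume "c \<in> {0::nat} \<times> {..j}"
        then obtain j' where c: "c = (0, j')" "j' \<le> j" by auto
        have cj: "(0, j') \<in> cells lam" using cells_left[OF j(2) c(2)] .
        have "T (0, j') \<le> T (0, j)" using F3[OF T j(2) c(2)] .
        then show "c \<in> Z" unfolding Z_def using c cj j(3) by simp
      qed
      then have "card ({0::nat} \<times> {..j}) \<le> card Z" using finZ by (rule card_mono[rotated])
      then show False using cZ j(1) by (simp add: card_cartesian_product)
    qed
    have "Z \<subseteq> {0} \<times> {..<k0}"
    proof
      fix c assume c: "c \<in> Z"
      obtain i j where ij: "c = (i, j)" by (cases c)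
      have cc: "(i, j) \<in> cells lam" "T (i, j) = 0" using c ij unfolding Z_def by auto
      have "i = 0" using F2[OF T cc] .
      moreover have "j < k0" using second cc \<open>i = 0\<close> by (meson not_le)
      ultimately show "c \<in> {0} \<times> {..<k0}" using ij by simp
    qed
    moreover have "card ({0::nat} \<times> {..<k0}) = card Z" using cZ by (simp add: card_cartesian_product)
    ultimately have "Z = {0} \<times> {..<k0}" by (intro card_subset_eq) auto
    then have zz: "\<forall>j<k0. (0, j) \<in> Z" by simp
    have "\<forall>j<k0. (0, j) \<in> cells lam \<and> T (0, j) = 0"
    proof (intro allI impI)
      fix j assume "j < k0"
      then have "(0, j) \<in> Z" using zz by blast
      then show "(0, j) \<in> cells lam \<and> T (0, j) = 0" unfolding Z_def by blast
    qed
    then show ?thesis using second by blast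
  qed
  have Fin: "F T \<in> ssyt lam beta" if T: "T \<in> ssyt lam alpha" for T
  proof -
    note z = zeros[OF T]
    have c0c: "c0 \<in> cells lam" and Tc0: "T c0 = 0" using z k0pos unfolding c0_def by auto
    have r1: "F T \<in> cells lam \<rightarrow>\<^sub>E UNIV" using props(1)[OF T] c0c unfolding F_def by (auto simp: PiE_iff extensional_def)
    have r2: "F T (i, j) \<le> F T (i, Suc j)" if ij: "(i, Suc j) \<in> cells lam" for i j
    proof -
      have base: "T (i, j) \<le> T (i, Suc j)" using props(2)[OF T ij] .
      consider "(i, j) = c0" | "(i, Suc j) = c0" | "(i, j) \<noteq> c0 \<and> (i, Suc j) \<noteq> c0" by blast
      then show ?thesis
      proof cases
        case 1
        then have i0: "i = 0" and jk: "Suc j = k0" using k0pos unfolding c0_def by auto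
        have "T (0, Suc j) \<noteq> 0" using z jk ij i0 by simp
        then show ?thesis using 1 i0 unfolding F_def c0_def by auto
      next
        case 2
        then have i0: "i = 0" and jk: "Suc j = k0 - 1" unfolding c0_def by auto
        have "T (0, j) = 0" using z jk by simp
        then show ?thesis using 2 i0 unfolding F_def c0_def by auto
      next
        case 3
        then show ?thesis using base unfolding F_def by simp
      qed
    qed
    have r3: "F T (i, j) < F T (Suc i, j)" if ij: "(Suc i, j) \<in> cells lam" for i j
    proof -
      have base: "T (i, j) < T (Suc i, j)" using props(3)[OF T ij] .
      have ne: "(Suc i, j) \<noteq> c0" unfolding c0_def by simp
      show ?thesis
      proof (cases "(i, j) = c0")
        case False
        then show ?thesis using base ne unfolding F_def by simp
      next
        case True
        then have i0: "i = 0" and jk: "j = k0 - 1" unfolding c0_def by auto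
        have c1: "(1, k0 - 1) \<in> cells lam" using ij i0 jk by simp
        have n0: "T (1, k0 - 1) \<noteq> 0" using F2[OF T c1] by auto
        have "T (1, k0 - 1) \<noteq> 1"
        proof
          assume t1: "T (1, k0 - 1) = 1"
          have "{1} \<times> {..<k0} \<subseteq> {c \<in> cells lam. T c = 1}"
          proof
            fix c assume "c \<in> {1::nat} \<times> {..<k0}"
            then obtain j' where c: "c = (1, j')" "j' \<le> k0 - 1" by auto
            have cj: "(1, j') \<in> cells lam" using cells_left[OF c1 c(2)] .
            have "T (1, j') \<le> 1" using F3[OF T c1 c(2)] t1 by simp
            moreover have "T (1, j') \<noteq> 0" using F2[OF T cj] by auto
            ultimately show "c \<in> {c \<in> cells lam. T c = 1}" using c cj by simp
          qed
          then have "card ({1::nat} \<times> {..<k0}) \<le> card {c \<in> cells lam. T c = 1}"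
            using cells_finite by (intro card_mono) auto
          then have "k0 \<le> alpha 1" using props(4)[OF T, of 1] by (simp add: card_cartesian_product)
          then show False using a01 k0_def by simp
        qed
        then have "1 < T (1, k0 - 1)" using n0 by simp
        then show ?thesis using True ne i0 jk unfolding F_def c0_def by simp
      qed
    qed
    have r4: "card {c \<in> cells lam. F T c = k} = beta k" for k
    proof -
      consider "k = 0" | "k = 1" | "k \<noteq> 0 \<and> k \<noteq> 1" by blast
      then show ?thesis
      proof cases
        case 1
        have "{c \<in> cells lam. F T c = k} = {c \<in> cells lam. T c = 0} - {c0}" using 1 unfolding F_def by auto
        moreover have "c0 \<in> {c \<in> cells lam. T c = 0}" using c0c Tc0 by simp
        ultimately have "card {c \<in> cells lam. F T c = k} = card {c \<in> cells lam. T c = 0} - 1"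
          using cells_finite by (simp add: card_Diff_singleton)
        then show ?thesis using props(4)[OF T, of 0] b0 1 by simp
      next
        case 2
        have "{c \<in> cells lam. F T c = k} = insert c0 {c \<in> cells lam. T c = 1}" using 2 c0c unfolding F_def by auto
        moreover have "c0 \<notin> {c \<in> cells lam. T c = 1}" using Tc0 by simp
        ultimately have "card {c \<in> cells lam. F T c = k} = card {c \<in> cells lam. T c = 1} + 1"
          using cells_finite by simp
        then show ?thesis using props(4)[OF T, of 1] b1 2 by simp
      next
        case 3
        have "{c \<in> cells lam. F T c = k} = {c \<in> cells lam. T c = k}" using 3 Tc0 unfolding F_def by auto
        then show ?thesis using props(4)[OF T, of k] bo 3 by simp
      qed
    qed
    show ?thesis unfolding ssyt_def using r1 r2 r3 r4 by blast
  qed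
  have inj: "inj_on F (ssyt lam alpha)"
  proof (rule inj_onI)
    fix T1 T2 assume T1: "T1 \<in> ssyt lam alpha" and T2: "T2 \<in> ssyt lam alpha" and eq: "F T1 = F T2"
    have "T1 c0 = 0" "T2 c0 = 0" using zeros[OF T1] zeros[OF T2] k0pos unfolding c0_def by auto
    then show "T1 = T2" using eq unfolding F_def by (metis fun_upd_triv fun_upd_upd)
  qed
  show ?thesis by (rule card_inj_on_le[OF inj]) (use Fin ssyt_finite[OF fin] in auto)
qed

lemma schur_mono:
  assumes sp: "schur_positive V E" and a01: "alpha 1 < alpha 0" and fin: "finite {k. beta k \<noteq> 0}"
    and b0: "beta 0 + 1 = alpha 0" and b1: "beta 1 = alpha 1 + 1"
    and bo: "\<And>k. k \<noteq> 0 \<Longrightarrow> k \<noteq> 1 \<Longrightarrow> beta k = alpha k"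
  shows "chrom_coeff V E alpha \<le> chrom_coeff V E beta"
proof -
  obtain c :: "nat list \<Rightarrow> int" where c0: "\<forall>mu\<in>partitions (card V). 0 \<le> c mu"
    and eq: "\<forall>alpha. int (chrom_coeff V E alpha) = (\<Sum>mu\<in>partitions (card V). c mu * int (s_coeff mu alpha))"
    using sp unfolding schur_positive_def by blast
  have "int (chrom_coeff V E alpha) = (\<Sum>mu\<in>partitions (card V). c mu * int (s_coeff mu alpha))" using eq by blast
  also have "\<dots> \<le> (\<Sum>mu\<in>partitions (card V). c mu * int (s_coeff mu beta))"
  proof (rule sum_mono)
    fix mu assume mu: "mu \<in> partitions (card V)"
    then have "sorted_wrt (\<ge>) mu" by (simp add: partitions_def)
    then have "s_coeff mu alpha \<le> s_coeff mu beta" unfolding s_coeff_def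
      by (rule ssyt_mono[OF _ a01 fin b0 b1 bo])
    then show "c mu * int (s_coeff mu alpha) \<le> c mu * int (s_coeff mu beta)"
      using c0 mu by (simp add: mult_left_mono)
  qed
  also have "\<dots> = int (chrom_coeff V E beta)" using eq by metis
  finally show ?thesis by simp
qed

definition alf :: "nat list \<Rightarrow> nat \<Rightarrow> nat" where
  "alf xs i = (if i < length xs then xs ! i else 0)"

lemma alf_supp: "\<forall>x\<in>set xs. 0 < x \<Longrightarrow> \<forall>i. (alf xs i \<noteq> 0) = (i \<in> set [0..<length xs])"
  by (auto simp: alf_def)

lemma alf_map: "map (alf xs) [0..<length xs] = xs"
  by (rule nth_equalityI) (auto simp: alf_def)

lemma alf_fin: "finite {k. alf xs k \<noteq> 0}"
  by (rule finite_subset[of _ "{..<length xs}"]) (auto simp: alf_def split: if_splits)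

lemma cf3_Cons: "cf [r,s,t] (x#xs) =
   (if x \<le> r then (r choose x) * cf [r-x,s,t] xs else 0) +
   (if x \<le> s then (s choose x) * cf [r,s-x,t] xs else 0) +
   (if x \<le> t then (t choose x) * cf [r,s,t-x] xs else 0)"
  by (simp add: numeral_eq_Suc upt_rec)

lemma cf3_Nil: "cf [r,s,t] [] = (if r = 0 \<and> s = 0 \<and> t = 0 then 1 else 0)"
  by simp

lemma cf_swap12: "cf [r,s,t] xs = cf [s,r,t] xs"
proof (induction xs arbitrary: r s t)
  case Nil
  then show ?case unfolding cf3_Nil by (simp add: conj_commute conj_left_commute)
next
  case (Cons x xs)
  have h1: "cf [r-x,s,t] xs = cf [s,r-x,t] xs" by (rule Cons.IH)
  have h2: "cf [r,s-x,t] xs = cf [s-x,r,t] xs" by (rule Cons.IH)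
  have h3: "cf [r,s,t-x] xs = cf [s,r,t-x] xs" by (rule Cons.IH)
  show ?case unfolding cf3_Cons h1 h2 h3 by (simp only: ac_simps)
qed

lemma cf_swap23: "cf [r,s,t] xs = cf [r,t,s] xs"
proof (induction xs arbitrary: r s t)
  case Nil
  then show ?case unfolding cf3_Nil by (simp add: conj_commute conj_left_commute)
next
  case (Cons x xs)
  have h1: "cf [r-x,s,t] xs = cf [r-x,t,s] xs" by (rule Cons.IH)
  have h2: "cf [r,s-x,t] xs = cf [r,t,s-x] xs" by (rule Cons.IH)
  have h3: "cf [r,s,t-x] xs = cf [r,t-x,s] xs" by (rule Cons.IH)
  show ?case unfolding cf3_Cons h1 h2 h3 by (simp only: ac_simps)
qed

lemma neg_key:
  assumes cfeq: "\<forall>xs. cf [r,s,t] xs = cf [a,b,c] xs"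
    and xp: "\<forall>x\<in>set xs. 0 < x" and yp: "\<forall>y\<in>set ys. 0 < y"
    and len: "length ys = length xs" "2 \<le> length xs"
    and y0: "ys ! 0 + 1 = xs ! 0" and y1: "ys ! 1 = xs ! 1 + 1"
    and yk: "\<forall>k. 2 \<le> k \<longrightarrow> k < length xs \<longrightarrow> ys ! k = xs ! k"
    and x01: "xs ! 1 < xs ! 0"
    and cpos: "0 < cf [a,b,c] xs" and czero: "cf [a,b,c] ys = 0"
  shows "\<not> schur_positive (tri_V r s t) tri_E"
proof
  assume sp: "schur_positive (tri_V r s t) tri_E"
  have l0: "0 < length xs" "1 < length xs" "0 < length ys" "1 < length ys" using len by auto
  have "chrom_coeff (tri_V r s t) tri_E (alf xs) \<le> chrom_coeff (tri_V r s t) tri_E (alf ys)"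
  proof (rule schur_mono[OF sp])
    show "alf xs 1 < alf xs 0" using x01 l0 by (simp add: alf_def)
    show "finite {k. alf ys k \<noteq> 0}" by (rule alf_fin)
    show "alf ys 0 + 1 = alf xs 0" using y0 l0 by (simp add: alf_def)
    show "alf ys 1 = alf xs 1 + 1" using y1 l0 by (simp add: alf_def)
    show "alf ys k = alf xs k" if "k \<noteq> 0" "k \<noteq> 1" for k
      using that yk len by (auto simp: alf_def)
  qed
  moreover have "chrom_coeff (tri_V r s t) tri_E (alf xs) = cf [a,b,c] xs"
    using chrom_tri[OF distinct_upt alf_supp[OF xp]] alf_map cfeq by metis
  moreover have "chrom_coeff (tri_V r s t) tri_E (alf ys) = cf [a,b,c] ys"
    using chrom_tri[OF distinct_upt alf_supp[OF yp]] alf_map cfeq by metis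
  ultimately show False using cpos czero by simp
qed

lemma neg_tri:
  assumes ab: "b \<le> a" and bc: "c \<le> b" and c1: "1 \<le> c"
    and nex: "[c,b,a] \<notin> {[1,1,1], [1,1,2], [1,2,2], [2,2,2], [2,2,3]}"
    and cfeq: "\<forall>xs. cf [r,s,t] xs = cf [a,b,c] xs"
  shows "\<not> schur_positive (tri_V r s t) tri_E"
proof (cases "c + 2 \<le> a")
  case True
  show ?thesis
  proof (rule neg_key[OF cfeq, of "[a,c,b]" "[a-1,c+1,b]"])
    show "0 < cf [a,b,c] [a,c,b]" using ab bc c1
      by (simp only: cf3_Cons cf3_Nil) (simp split: if_splits)
    show "cf [a,b,c] [a-1,c+1,b] = 0" using ab bc c1 True
      by (simp only: cf3_Cons cf3_Nil) (simp split: if_splits)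
  qed (use ab bc c1 True in auto)
next
  case False
  then have "a = c \<or> a = c + 1" using ab bc by linarith
  then consider (eq) "a = c" "b = c" | (b1) "a = c + 1" "b = c" | (b2) "a = c + 1" "b = a"
    using ab bc by linarith
  then show ?thesis
  proof cases
    case eq
    then have q3: "3 \<le> c" using nex c1 by (cases "c = 1"; cases "c = 2") auto
    show ?thesis
    proof (rule neg_key[OF cfeq, of "[c,1,c-1,c]" "[c-1,2,c-1,c]"])
      show "0 < cf [a,b,c] [c,1,c-1,c]" using eq q3
        by (simp only: cf3_Cons cf3_Nil) (simp split: if_splits)
      show "cf [a,b,c] [c-1,2,c-1,c] = 0" using eq q3
        by (simp only: cf3_Cons cf3_Nil) (simp split: if_splits)
    qed (use q3 in \<open>auto simp: less_Suc_eq numeral_eq_Suc\<close>)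
  next
    case b1
    then have q3: "3 \<le> c" using nex c1 by (cases "c = 1"; cases "c = 2") auto
    show ?thesis
    proof (rule neg_key[OF cfeq, of "[c,1,c-1,c+1]" "[c-1,2,c-1,c+1]"])
      show "0 < cf [a,b,c] [c,1,c-1,c+1]" using b1 q3
        by (simp only: cf3_Cons cf3_Nil) (simp split: if_splits)
      show "cf [a,b,c] [c-1,2,c-1,c+1] = 0" using b1 q3
        by (simp only: cf3_Cons cf3_Nil) (simp split: if_splits)
    qed (use q3 in \<open>auto simp: less_Suc_eq numeral_eq_Suc\<close>)
  next
    case b2
    then have q2: "2 \<le> c" using nex c1 by (cases "c = 1") auto
    show ?thesis
    proof (rule neg_key[OF cfeq, of "[c+1,1,c,c]" "[c,2,c,c]"])
      show "0 < cf [a,b,c] [c+1,1,c,c]" using b2 q2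
        by (simp only: cf3_Cons cf3_Nil) (simp split: if_splits)
      show "cf [a,b,c] [c,2,c,c] = 0" using b2 q2
        by (simp only: cf3_Cons cf3_Nil) (simp split: if_splits)
    qed (use q2 in \<open>auto simp: less_Suc_eq numeral_eq_Suc\<close>)
  qed
qed

lemma sort3:
  "t \<le> s \<Longrightarrow> s \<le> r \<Longrightarrow> sort [r,s,t] = [t,s,(r::nat)]"
  "s \<le> t \<Longrightarrow> t \<le> r \<Longrightarrow> sort [r,s,t] = [s,t,(r::nat)]"
  "t \<le> r \<Longrightarrow> r \<le> s \<Longrightarrow> sort [r,s,t] = [t,r,(s::nat)]"
  "r \<le> t \<Longrightarrow> t \<le> s \<Longrightarrow> sort [r,s,t] = [r,t,(s::nat)]"
  "s \<le> r \<Longrightarrow> r \<le> t \<Longrightarrow> sort [r,s,t] = [s,r,(t::nat)]"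
  "r \<le> s \<Longrightarrow> s \<le> t \<Longrightarrow> sort [r,s,t] = [r,s,(t::nat)]"
  by auto

lemma neg_all:
  "\<forall>r s t :: nat. 1 \<le> r \<and> 1 \<le> s \<and> 1 \<le> t \<and>
            sort [r, s, t] \<notin> {[1,1,1], [1,1,2], [1,2,2], [2,2,2], [2,2,3]} \<longrightarrow>
            \<not> schur_positive (tri_V r s t) tri_E"
proof (intro allI impI)
  fix r s t :: nat
  assume H: "1 \<le> r \<and> 1 \<le> s \<and> 1 \<le> t \<and> sort [r, s, t] \<notin> {[1,1,1], [1,1,2], [1,2,2], [2,2,2], [2,2,3]}"
  then have h1: "1 \<le> r" "1 \<le> s" "1 \<le> t" and hs: "sort [r, s, t] \<notin> {[1,1,1], [1,1,2], [1,2,2], [2,2,2], [2,2,3]}"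
    by auto
  consider "t \<le> s \<and> s \<le> r" | "s \<le> t \<and> t \<le> r" | "t \<le> r \<and> r \<le> s" | "r \<le> t \<and> t \<le> s" | "s \<le> r \<and> r \<le> t" | "r \<le> s \<and> s \<le> t"
    by linarith
  then show "\<not> schur_positive (tri_V r s t) tri_E"
  proof cases
    case 1
    show ?thesis by (rule neg_tri[of s r t]) (use 1 h1 hs sort3(1)[of t s r] in auto)
  next
    case 2
    show ?thesis by (rule neg_tri[of t r s]) (use 2 h1 hs sort3(2)[of s t r] cf_swap23 in auto)
  next
    case 3
    show ?thesis by (rule neg_tri[of r s t]) (use 3 h1 hs sort3(3)[of t r s] cf_swap12 in auto)
  next
    case 4
    have "\<forall>xs. cf [r,s,t] xs = cf [s,t,r] xs" using cf_swap12 cf_swap23 by metis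
    then show ?thesis by (intro neg_tri[of t s r]) (use 4 h1 hs sort3(4)[of r t s] in auto)
  next
    case 5
    have "\<forall>xs. cf [r,s,t] xs = cf [t,r,s] xs" using cf_swap12 cf_swap23 by metis
    then show ?thesis by (intro neg_tri[of r t s]) (use 5 h1 hs sort3(5)[of s r t] in auto)
  next
    case 6
    have "\<forall>xs. cf [r,s,t] xs = cf [t,s,r] xs" using cf_swap12 cf_swap23 by metis
    then show ?thesis by (intro neg_tri[of s t r]) (use 6 h1 hs sort3(6)[of r s t] in auto)
  qed
qed

lemma epos111: "e_positive (tri_V 1 1 1) tri_E"
proof (rule epos_from_check[where N = 3 and L = "[([3], 6)]"])
  show "\<forall>xs\<in>set (compsf 3 3). int (cf [1, 1, 1] xs) = sum_list (map (\<lambda>(mu, v). v * int (ef mu xs)) [([3], 6)])"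
    by code_simp
qed (auto simp: partitions_def)

lemma epos112: "e_positive (tri_V 1 1 2) tri_E"
proof (rule epos_from_check[where N = 4 and L = "[([4], 16), ([3,1], 2)]"])
  show "\<forall>xs\<in>set (compsf 4 4). int (cf [1, 1, 2] xs) = sum_list (map (\<lambda>(mu, v). v * int (ef mu xs)) [([4], 16), ([3,1], 2)])"
    by code_simp
qed (auto simp: partitions_def)

lemma epos122: "e_positive (tri_V 1 2 2) tri_E"
proof (rule epos_from_check[where N = 5 and L = "[([5], 70), ([4,1], 6), ([3,2], 2)]"])
  show "\<forall>xs\<in>set (compsf 5 5). int (cf [1, 2, 2] xs) = sum_list (map (\<lambda>(mu, v). v * int (ef mu xs)) [([5], 70), ([4,1], 6), ([3,2], 2)])"
    by code_simp
qed (auto simp: partitions_def)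

lemma epos222: "e_positive (tri_V 2 2 2) tri_E"
proof (rule epos_from_check[where N = 6 and L = "[([6], 384), ([5,1], 36), ([3,3], 6)]"])
  show "\<forall>xs\<in>set (compsf 6 6). int (cf [2, 2, 2] xs) = sum_list (map (\<lambda>(mu, v). v * int (ef mu xs)) [([6], 384), ([5,1], 36), ([3,3], 6)])"
    by code_simp
qed (auto simp: partitions_def)

lemma epos223: "e_positive (tri_V 2 2 3) tri_E"
proof (rule epos_from_check[where N = 7 and L = "[([7],1988),([6,1],268),([5,2],12),([5,1,1],12),([4,3],4),([3,3,1],2)]"])
  show "\<forall>xs\<in>set (compsf 7 7). int (cf [2, 2, 3] xs) = sum_list (map (\<lambda>(mu, v). v * int (ef mu xs)) [([7],1988),([6,1],268),([5,2],12),([5,1,1],12),([4,3],4),([3,3,1],2)])"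
    by code_simp
qed (auto simp: partitions_def)

theorem theorem3p7:
  shows "e_positive (tri_V 1 1 1) tri_E \<and> e_positive (tri_V 1 1 2) tri_E \<and>
         e_positive (tri_V 1 2 2) tri_E \<and> e_positive (tri_V 2 2 2) tri_E \<and>
         e_positive (tri_V 2 2 3) tri_E \<and>
         (\<forall>r s t :: nat. 1 \<le> r \<and> 1 \<le> s \<and> 1 \<le> t \<and>
            sort [r, s, t] \<notin> {[1,1,1], [1,1,2], [1,2,2], [2,2,2], [2,2,3]} \<longrightarrow>
            \<not> schur_positive (tri_V r s t) tri_E)"
  using epos111 epos112 epos122 epos222 epos223 neg_all by blast

end
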